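(* Let $q$ be a prime power with $q\equiv 1 \pmod 3$, let $\delta\in\mathbb{F}_q$ be a cubic nonresidue, and let $\mathbb{F}_q(\delta^{1/3})$ be the cubic extension with $\mathbb{F}_q$-basis $\{1,\delta^{1/3},\delta^{2/3}\}$; write $\alpha=\alpha_1+\alpha_2\delta^{1/3}+\alpha_3\delta^{2/3}$ with $\alpha_i\in\mathbb{F}_q$. Let $\mathbb{H}_q=\{(\alpha,\beta)\in \mathbb{F}_q(\delta^{1/3})^2 : \alpha_2\beta_3-\alpha_3\beta_2\neq 0\}$ with the action of $\mathrm{GL}_3(\mathbb{F}_q)$ given by \[ \begin{bmatrix} a & b & c\\ d & e & f\\ r & s & t \end{bmatrix} (\alpha,\beta) = \left(\frac{a\alpha+b\beta+c}{r\alpha+s\beta+t}, \frac{d\alpha+e\beta+f}{r\alpha+s\beta+t} \right). \] Let \[H=\left\{\begin{bmatrix} d & y & x\\ 0 & c & b\\ 0 & 0 & d\end{bmatrix} : c,d\in\mathbb{F}_q^\times,\ b,x,y\in\mathbb{F}_q\right\}\] (the centralizer in $\mathrm{GL}_3(\mathbb{F}_q)$ of $\begin{bmatrix} a&0&a\\0&a&0\\0&0&a\end{bmatrix}$, $a\neq 0$). Then \[\{(u\delta^{1/3},\,v\delta^{1/3}+\delta^{2/3}) : u,v\in\mathbb{F}_q,\ u\neq 0\}\ \sqcup\ \{(\delta^{1/3}+u\delta^{2/3},\,\delta^{1/3}) : u\in\mathbb{F}_q^\times\}\] is a fundamental domain for the action of $H$ on $\mathbb{H}_q$.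
   Context: A fundamental domain for the action of a subgroup $H$ on $\mathbb{H}_q$ is a subset of $\mathbb{H}_q$ containing exactly one element of each $H$-orbit. A cubic nonresidue is an element of $\mathbb{F}_q^\times$ that is not a cube in $\mathbb{F}_q$. *)

theory Defs
  imports Main
begin

text \<open>Elements of the cubic extension F_q(delta^(1/3)) are represented by their
coordinate triples (a1,a2,a3) w.r.t. the F_q-basis 1, delta^(1/3), delta^(2/3).\<close>

type_synonym 'a ext = "'a \<times> 'a \<times> 'a"

definition c1 :: "'a ext \<Rightarrow> 'a" where "c1 z = fst z"
definition c2 :: "'a ext \<Rightarrow> 'a" where "c2 z = fst (snd z)"
definition c3 :: "'a ext \<Rightarrow> 'a" where "c3 z = snd (snd z)"

definition cubic_nonresidue :: "'a::field \<Rightarrow> bool" where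
  "cubic_nonresidue \<delta> \<longleftrightarrow> \<delta> \<noteq> 0 \<and> \<not> (\<exists>x. x ^ 3 = \<delta>)"

definition ext_of :: "'a::field \<Rightarrow> 'a ext" where
  "ext_of a = (a, 0, 0)"

definition ext_add :: "'a::field ext \<Rightarrow> 'a ext \<Rightarrow> 'a ext" where
  "ext_add z w = (c1 z + c1 w, c2 z + c2 w, c3 z + c3 w)"

definition ext_smul :: "'a::field \<Rightarrow> 'a ext \<Rightarrow> 'a ext" where
  "ext_smul a z = (a * c1 z, a * c2 z, a * c3 z)"

text \<open>Multiplication using (delta^(1/3))^3 = delta.\<close>
definition ext_mul :: "'a::field \<Rightarrow> 'a ext \<Rightarrow> 'a ext \<Rightarrow> 'a ext" where
  "ext_mul \<delta> z w =
     (c1 z * c1 w + \<delta> * (c2 z * c3 w + c3 z * c2 w),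
      c1 z * c2 w + c2 z * c1 w + \<delta> * (c3 z * c3 w),
      c1 z * c3 w + c2 z * c2 w + c3 z * c1 w)"

text \<open>Division in the cubic extension (a field when delta is a cubic nonresidue).\<close>
definition ext_div :: "'a::field \<Rightarrow> 'a ext \<Rightarrow> 'a ext \<Rightarrow> 'a ext" where
  "ext_div \<delta> z w = (THE u. ext_mul \<delta> u w = z)"

definition Hq :: "'a::field itself \<Rightarrow> ('a ext \<times> 'a ext) set" where
  "Hq _ = {(\<alpha>, \<beta>). c2 \<alpha> * c3 \<beta> - c3 \<alpha> * c2 \<beta> \<noteq> 0}"

text \<open>3x3 matrices as functions of (row, column) indices 0,1,2.\<close>
type_synonym 'a mat3 = "nat \<Rightarrow> nat \<Rightarrow> 'a"

definition mat3 :: "'a::zero \<Rightarrow> 'a \<Rightarrow> 'a \<Rightarrow> 'a \<Rightarrow> 'a \<Rightarrow> 'a \<Rightarrow> 'a \<Rightarrow> 'a \<Rightarrow> 'a \<Rightarrow> 'a mat3" where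
  "mat3 a b c d e f r s t = (\<lambda>i j.
     if i = 0 \<and> j = 0 then a else if i = 0 \<and> j = 1 then b else if i = 0 \<and> j = 2 then c else
     if i = 1 \<and> j = 0 then d else if i = 1 \<and> j = 1 then e else if i = 1 \<and> j = 2 then f else
     if i = 2 \<and> j = 0 then r else if i = 2 \<and> j = 1 then s else if i = 2 \<and> j = 2 then t else 0)"

definition lin3 :: "'a::field \<Rightarrow> 'a \<Rightarrow> 'a \<Rightarrow> 'a ext \<Rightarrow> 'a ext \<Rightarrow> 'a ext" where
  "lin3 a b c \<alpha> \<beta> = ext_add (ext_add (ext_smul a \<alpha>) (ext_smul b \<beta>)) (ext_of c)"

definition act :: "'a::field \<Rightarrow> 'a mat3 \<Rightarrow> 'a ext \<times> 'a ext \<Rightarrow> 'a ext \<times> 'a ext" where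
  "act \<delta> M p = (let \<alpha> = fst p; \<beta> = snd p;
                    den = lin3 (M 2 0) (M 2 1) (M 2 2) \<alpha> \<beta> in
     (ext_div \<delta> (lin3 (M 0 0) (M 0 1) (M 0 2) \<alpha> \<beta>) den,
      ext_div \<delta> (lin3 (M 1 0) (M 1 1) (M 1 2) \<alpha> \<beta>) den))"

definition Hgrp :: "'a::field itself \<Rightarrow> 'a mat3 set" where
  "Hgrp _ = {mat3 d y x 0 c b 0 0 d | c d b x y. c \<noteq> 0 \<and> d \<noteq> 0}"

definition orbit :: "'a::field \<Rightarrow> 'a mat3 set \<Rightarrow> 'a ext \<times> 'a ext \<Rightarrow> ('a ext \<times> 'a ext) set" where
  "orbit \<delta> G p = (\<lambda>M. act \<delta> M p) ` G"

definition fundamental_domain ::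
  "'a::field \<Rightarrow> 'a mat3 set \<Rightarrow> ('a ext \<times> 'a ext) set \<Rightarrow> ('a ext \<times> 'a ext) set \<Rightarrow> bool" where
  "fundamental_domain \<delta> G X D \<longleftrightarrow> D \<subseteq> X \<and> (\<forall>p\<in>X. \<exists>!z. z \<in> D \<and> z \<in> orbit \<delta> G p)"

end

theory Submission
  imports Defs
begin

lemma div_const:
  fixes d :: "'a::field"
  assumes "d \<noteq> 0"
  shows "ext_div \<delta> z (d,0,0) = (c1 z / d, c2 z / d, c3 z / d)"
proof -
  have "ext_mul \<delta> u (d,0,0) = z \<longleftrightarrow> u = (c1 z / d, c2 z / d, c3 z / d)" for u
    using assms by (cases u; cases z) (auto simp: ext_mul_def c1_def c2_def c3_def field_simps)
  then show ?thesis unfolding ext_div_def by simp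
qed

lemma act_H:
  fixes d :: "'a::field"
  assumes "d \<noteq> 0"
  shows "act \<delta> (mat3 d y x 0 c b 0 0 d) ((a1,a2,a3),(b1,b2,b3)) =
    (((d*a1+y*b1+x)/d, (d*a2+y*b2)/d, (d*a3+y*b3)/d), ((c*b1+b)/d, c*b2/d, c*b3/d))"
proof -
  have "lin3 0 0 d (a1,a2,a3) (b1,b2,b3) = (d,0,0)"
    by (simp add: lin3_def ext_add_def ext_smul_def ext_of_def c1_def c2_def c3_def)
  then show ?thesis using assms
    by (simp add: act_def mat3_def div_const lin3_def ext_add_def ext_smul_def ext_of_def c1_def c2_def c3_def)
qed

lemma orbit_H:
  "z \<in> orbit \<delta> (Hgrp TYPE('a::field)) ((a1,a2,a3),(b1,b2,b3)) \<longleftrightarrow>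
   (\<exists>c d b x y. c \<noteq> 0 \<and> d \<noteq> 0 \<and> z =
    (((d*a1+y*b1+x)/d, (d*a2+y*b2)/d, (d*a3+y*b3)/d), ((c*b1+b)/d, c*b2/d, c*b3/d)))"
proof
  assume "z \<in> orbit \<delta> (Hgrp TYPE('a::field)) ((a1,a2,a3),(b1,b2,b3))"
  then obtain c d b x y where "c \<noteq> 0" "d \<noteq> 0"
    "z = act \<delta> (mat3 d y x 0 c b 0 0 d) ((a1,a2,a3),(b1,b2,b3))"
    unfolding orbit_def Hgrp_def by blast
  then show "\<exists>c d b x y. c \<noteq> 0 \<and> d \<noteq> 0 \<and> z =
    (((d*a1+y*b1+x)/d, (d*a2+y*b2)/d, (d*a3+y*b3)/d), ((c*b1+b)/d, c*b2/d, c*b3/d))"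
    using act_H by blast
next
  assume "\<exists>c d b x y. c \<noteq> 0 \<and> d \<noteq> 0 \<and> z =
    (((d*a1+y*b1+x)/d, (d*a2+y*b2)/d, (d*a3+y*b3)/d), ((c*b1+b)/d, c*b2/d, c*b3/d))"
  then obtain c d b x y where cd: "c \<noteq> 0" "d \<noteq> 0" and ze: "z =
    (((d*a1+y*b1+x)/d, (d*a2+y*b2)/d, (d*a3+y*b3)/d), ((c*b1+b)/d, c*b2/d, c*b3/d))" by blast
  have "mat3 d y x 0 c b 0 0 d \<in> Hgrp TYPE('a)" unfolding Hgrp_def using cd by blast
  moreover have "z = act \<delta> (mat3 d y x 0 c b 0 0 d) ((a1,a2,a3),(b1,b2,b3))"
    using ze cd act_H by metis
  ultimately show "z \<in> orbit \<delta> (Hgrp TYPE('a::field)) ((a1,a2,a3),(b1,b2,b3))"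
    unfolding orbit_def by blast
qed

definition canon :: "'a::field ext \<times> 'a ext \<Rightarrow> 'a ext \<times> 'a ext" where
  "canon p = (let a2 = c2 (fst p); a3 = c3 (fst p); b2 = c2 (snd p); b3 = c3 (snd p) in
     if b3 \<noteq> 0 then ((0, a2 - a3*b2/b3, 0),(0, b2/b3, 1)) else ((0,1,a3),(0,1,0)))"

theorem proposition5p1:
  fixes \<delta> :: "'a::{finite, field}"
  assumes "card (UNIV :: 'a set) mod 3 = 1"
    and "cubic_nonresidue \<delta>"
  defines "D1 \<equiv> {((0, u, 0), (0, v, 1)) | u v :: 'a. u \<noteq> 0}"
    and "D2 \<equiv> {((0, 1, u), (0, 1, 0)) | u :: 'a. u \<noteq> 0}"
  shows "D1 \<inter> D2 = {} \<and> fundamental_domain \<delta> (Hgrp TYPE('a)) (Hq TYPE('a)) (D1 \<union> D2)"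
proof -
  have dis: "D1 \<inter> D2 = {}" unfolding D1_def D2_def by auto
  have sub: "D1 \<union> D2 \<subseteq> Hq TYPE('a)" unfolding D1_def D2_def Hq_def
    by (auto simp: c2_def c3_def)
  have key: "\<exists>!z. z \<in> D1 \<union> D2 \<and> z \<in> orbit \<delta> (Hgrp TYPE('a)) p" if p: "p \<in> Hq TYPE('a)" for p
  proof -
    obtain a1 a2 a3 b1 b2 b3 where pe: "p = ((a1,a2,a3),(b1,b2,b3))"
      by (metis prod.collapse)
    have det: "a2*b3 - a3*b2 \<noteq> 0" using p pe by (simp add: Hq_def c2_def c3_def)
    show ?thesis
    proof (rule ex1I[of _ "canon p"])
      show "canon p \<in> D1 \<union> D2 \<and> canon p \<in> orbit \<delta> (Hgrp TYPE('a)) p"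
      proof (cases "b3 = 0")
        case False
        have u: "a2 - a3*b2/b3 \<noteq> 0" using det False by (auto simp: field_simps)
        have "canon p \<in> orbit \<delta> (Hgrp TYPE('a)) p" unfolding pe orbit_H
          apply (rule exI[of _ "1/b3"], rule exI[of _ 1], rule exI[of _ "-b1/b3"],
                 rule exI[of _ "-(a1+(-a3/b3)*b1)"], rule exI[of _ "-a3/b3"])
          using False by (simp add: canon_def c2_def c3_def field_simps)
        moreover have "canon p \<in> D1" using False u by (simp add: canon_def pe c2_def c3_def D1_def)
        ultimately show ?thesis by simp
      next
        case True
        then have b2: "b2 \<noteq> 0" and a3: "a3 \<noteq> 0" using det by auto
        have "canon p \<in> orbit \<delta> (Hgrp TYPE('a)) p" unfolding pe orbit_H
          apply (rule exI[of _ "1/b2"], rule exI[of _ 1], rule exI[of _ "-b1/b2"],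
                 rule exI[of _ "-(a1+((1-a2)/b2)*b1)"], rule exI[of _ "(1-a2)/b2"])
          using True b2 by (simp add: canon_def c2_def c3_def field_simps)
        moreover have "canon p \<in> D2" using True a3 by (simp add: canon_def pe c2_def c3_def D2_def)
        ultimately show ?thesis by simp
      qed
    next
      fix z assume z: "z \<in> D1 \<union> D2 \<and> z \<in> orbit \<delta> (Hgrp TYPE('a)) p"
      then obtain c d b x y where cd: "c \<noteq> 0" "d \<noteq> 0" and ze: "z =
        (((d*a1+y*b1+x)/d, (d*a2+y*b2)/d, (d*a3+y*b3)/d), ((c*b1+b)/d, c*b2/d, c*b3/d))"
        unfolding pe orbit_H by blast
      from z consider "z \<in> D1" | "z \<in> D2" by blast
      then show "z = canon p"
      proof cases
        case 1
        then obtain u v where zu: "z = ((0, u, 0), (0, v, 1))" unfolding D1_def by blast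
        have e1: "d*a3+y*b3 = 0" "c*b3 = d" "u = (d*a2+y*b2)/d" "v = c*b2/d"
          using zu ze cd by auto
        then have b3: "b3 \<noteq> 0" using cd by auto
        have "b3 * y = - (a3 * d)" using e1(1) by (simp add: algebra_simps add_eq_0_iff)
        then have "b3 * y = b3 * (-a3*c)" using e1(2) by (simp add: algebra_simps)
        then have y: "y = -a3*c" using b3 mult_left_cancel by blast
        have v: "v = b2/b3" using e1(2,4) b3 cd by (auto simp: field_simps)
        have "u = (c*b3*a2 - a3*c*b2)/(c*b3)" using e1(2,3) y by (simp add: algebra_simps)
        also have "\<dots> = a2 - a3*b2/b3" using b3 cd by (simp add: field_simps)
        finally have "u = a2 - a3*b2/b3" "v = b2/b3" using v by auto
        then show ?thesis using zu b3 by (simp add: canon_def pe c2_def c3_def)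
      next
        case 2
        then obtain u where zu: "z = ((0, 1, u), (0, 1, 0))" unfolding D2_def by blast
        have e1: "d*a2+y*b2 = d" "c*b3 = 0" "u = (d*a3+y*b3)/d" "c*b2 = d"
          using zu ze cd by auto
        then have b3: "b3 = 0" using cd by auto
        then have "u = a3" using e1 cd by auto
        then show ?thesis using zu b3 by (simp add: canon_def pe c2_def c3_def)
      qed
    qed
  qed
  show ?thesis using dis sub key unfolding fundamental_domain_def by blast
qed

end
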